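(* Let $0<b\leq a$ and let $\mathcal E(a,b)=\{x=(x_1,x_2)\in\mathbb R^2 : (x_1/a)^2+(x_2/b)^2=1\}$. For $q=(q_1,q_2)\in\mathbb R^2$ define $$\mathbf d^2(q):=\min\{|x-q|^2 : x\in\mathcal E(a,b)\}$$ and the quartic polynomial in $\lambda$ $$P(\lambda):=\big((\lambda-a^2)(\lambda-b^2)\big)^2-a^2q_1^2(\lambda-b^2)^2-b^2q_2^2(\lambda-a^2)^2 .$$ Let $\lambda^*(q)$ denote the smallest real root of $P$. Then $$\mathbf d^2(q)=\begin{cases} \left(\dfrac{\lambda^*(q)}{a^2-\lambda^*(q)}\,q_1\right)^2+\left(\dfrac{\lambda^*(q)}{b^2-\lambda^*(q)}\,q_2\right)^2 & \text{if } q_2\neq 0 \text{ or } a^2-a|q_1|<b^2,\\[2mm] b^2 & \text{if } q_1=q_2=0,\\[2mm] b^2-\dfrac{b^2}{a^2-b^2}\,q_1^2 & \text{if } q_2=0,\ q_1\neq 0 \text{ and } a^2-a|q_1|\geq b^2. \end{cases}$$ Moreover, $\lambda^*(q)=a^2-a|q|$ if $a=b$; if $b<a$ and $q_2\neq0$, $\lambda^*(q)$ is the unique root of $P$ in $(-\infty,b^2)$; and if $b<a$ and $q_2=0$, $\lambda^*(q)=\min\{a^2-a|q_1|,\,b^2\}$.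
   Context: $|\cdot|$ denotes the Euclidean norm on $\mathbb R^2$. $\mathbf d^2(q)$ is the squared Euclidean distance from $q$ to the ellipse curve $\mathcal E(a,b)$ (centered at the origin with semi-axes $a$ along the $x_1$-axis and $b$ along the $x_2$-axis). *)

theory Defs
  imports Complex_Main
begin

definition ellipse :: "real \<Rightarrow> real \<Rightarrow> (real \<times> real) set" where
  "ellipse a b = {(x1, x2). (x1 / a)^2 + (x2 / b)^2 = 1}"

definition sqdists :: "real \<Rightarrow> real \<Rightarrow> real \<Rightarrow> real \<Rightarrow> real set" where
  "sqdists a b q1 q2 = {(x1 - q1)^2 + (x2 - q2)^2 | x1 x2. (x1, x2) \<in> ellipse a b}"

text \<open>d^2(q): the minimum of the squared distances (taken as the infimum; the theorem also
  asserts it is attained).\<close>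
definition dist2_ell :: "real \<Rightarrow> real \<Rightarrow> real \<Rightarrow> real \<Rightarrow> real" where
  "dist2_ell a b q1 q2 = Inf (sqdists a b q1 q2)"

definition Pq :: "real \<Rightarrow> real \<Rightarrow> real \<Rightarrow> real \<Rightarrow> real \<Rightarrow> real" where
  "Pq a b q1 q2 l = ((l - a^2) * (l - b^2))^2 - a^2 * q1^2 * (l - b^2)^2
                      - b^2 * q2^2 * (l - a^2)^2"

definition lam_star :: "real \<Rightarrow> real \<Rightarrow> real \<Rightarrow> real \<Rightarrow> real" where
  "lam_star a b q1 q2 = (LEAST l. Pq a b q1 q2 l = 0)"

end

theory Submission
  imports Defs
begin

lemma ident0:
  fixes u A x q :: real
  assumes "u > 0" "A \<noteq> 0"
  shows "(x-q)^2 - (u-A)*(x^2/u) = A/u*(x - u*q/A)^2 - (u-A)*q^2/A"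
  using assms by (simp add: field_simps power2_eq_square)

lemma ident1:
  fixes u l x q :: real
  assumes "u > 0" "l \<noteq> u"
  shows "(x-q)^2 - l*(x^2/u) = (u-l)/u*(x - u*q/(u-l))^2 - l*q^2/(u-l)"
  using ident0[of u "u-l" x q] assms by simp

lemma ident:
  fixes a b l x1 x2 q1 q2 :: real
  assumes "a > 0" "b > 0" "l \<noteq> a^2" "l \<noteq> b^2"
  shows "(x1-q1)^2+(x2-q2)^2 - l*((x1/a)^2+(x2/b)^2-1)
   = (a^2-l)/a^2*(x1 - a^2*q1/(a^2-l))^2 + (b^2-l)/b^2*(x2 - b^2*q2/(b^2-l))^2
     + (l - l*q1^2/(a^2-l) - l*q2^2/(b^2-l))"
proof -
  have 1: "(x1-q1)^2 - l*(x1^2/a^2) = (a^2-l)/a^2*(x1 - a^2*q1/(a^2-l))^2 - l*q1^2/(a^2-l)"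
    by (rule ident1) (use assms in auto)
  have 2: "(x2-q2)^2 - l*(x2^2/b^2) = (b^2-l)/b^2*(x2 - b^2*q2/(b^2-l))^2 - l*q2^2/(b^2-l)"
    by (rule ident1) (use assms in auto)
  have "(x1-q1)^2+(x2-q2)^2 - l*((x1/a)^2+(x2/b)^2-1)
      = ((x1-q1)^2 - l*(x1^2/a^2)) + ((x2-q2)^2 - l*(x2^2/b^2)) + l"
    by (simp add: power_divide algebra_simps)
  then show ?thesis using 1 2 by simp
qed

lemma lower:
  fixes a b l x1 x2 q1 q2 :: real
  assumes "0 < b" "b \<le> a" "l < b^2" "(x1,x2) \<in> ellipse a b"
  shows "l - l*q1^2/(a^2-l) - l*q2^2/(b^2-l) \<le> (x1-q1)^2+(x2-q2)^2"
proof -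
  have a: "a > 0" using assms by auto
  have bb: "b^2 \<le> a^2" using assms by (simp add: power_mono)
  have e: "(x1/a)^2+(x2/b)^2 = 1" using assms(4) by (simp add: ellipse_def)
  have "(x1-q1)^2+(x2-q2)^2 = (x1-q1)^2+(x2-q2)^2 - l*((x1/a)^2+(x2/b)^2-1)" using e by simp
  also have "\<dots> = (a^2-l)/a^2*(x1 - a^2*q1/(a^2-l))^2 + (b^2-l)/b^2*(x2 - b^2*q2/(b^2-l))^2
     + (l - l*q1^2/(a^2-l) - l*q2^2/(b^2-l))"
    by (rule ident) (use a assms bb in linarith)+
  also have "\<dots> \<ge> l - l*q1^2/(a^2-l) - l*q2^2/(b^2-l)"
  proof -
    have p1: "a^2-l > 0" "b^2 - l > 0" using assms(3) bb by linarith+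
    have "(a^2-l)/a^2*(x1 - a^2*q1/(a^2-l))^2 \<ge> 0" using p1 by (intro mult_nonneg_nonneg divide_nonneg_nonneg) auto
    moreover have "(b^2-l)/b^2*(x2 - b^2*q2/(b^2-l))^2 \<ge> 0" using p1 by (intro mult_nonneg_nonneg divide_nonneg_nonneg) auto
    ultimately show ?thesis by linarith
  qed
  finally show ?thesis .
qed

lemma frac2:
  fixes A B X Y :: real
  assumes "A \<noteq> 0" "B \<noteq> 0"
  shows "X/A^2 + Y/B^2 = (X*B^2 + Y*A^2)/(A*B)^2"
  using assms by (simp add: field_simps)

lemma attain:
  fixes a b l q1 q2 :: real
  assumes "0 < b" "b \<le> a" "l < b^2" "Pq a b q1 q2 l = 0"
  shows "(a^2*q1/(a^2-l), b^2*q2/(b^2-l)) \<in> ellipse a b"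
    and "(a^2*q1/(a^2-l) - q1)^2 + (b^2*q2/(b^2-l) - q2)^2 = (l/(a^2-l)*q1)^2 + (l/(b^2-l)*q2)^2"
    and "(a^2*q1/(a^2-l) - q1)^2 + (b^2*q2/(b^2-l) - q2)^2 = l - l*q1^2/(a^2-l) - l*q2^2/(b^2-l)"
proof -
  have a: "a > 0" using assms by auto
  have bb: "b^2 \<le> a^2" using assms by (simp add: power_mono)
  have n1: "a^2 - l \<noteq> 0" "b^2 - l \<noteq> 0" using assms(3) bb by linarith+
  have P: "((l - a^2) * (l - b^2))^2 = a^2 * q1^2 * (l - b^2)^2 + b^2 * q2^2 * (l - a^2)^2"
    using assms(4) unfolding Pq_def by simp
  have E: "(a^2*q1/(a^2-l)/a)^2 + (b^2*q2/(b^2-l)/b)^2 = 1"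
  proof -
    have "(a^2*q1/(a^2-l)/a)^2 + (b^2*q2/(b^2-l)/b)^2 = (a^2*q1^2)/(a^2-l)^2 + (b^2*q2^2)/(b^2-l)^2"
      using a assms(1) by (simp add: power_divide power_mult_distrib power2_eq_square mult_ac)
    also have "\<dots> = (a^2*q1^2*(b^2-l)^2 + b^2*q2^2*(a^2-l)^2)/((a^2-l)*(b^2-l))^2"
      by (rule frac2) (use n1 in auto)
    also have "\<dots> = (a^2 * q1^2 * (l - b^2)^2 + b^2 * q2^2 * (l - a^2)^2) / ((l - a^2) * (l - b^2))^2"
    proof -
      have "((a^2-l)*(b^2-l))^2 = ((l - a^2) * (l - b^2))^2" by algebra
      moreover have "(b^2-l)^2 = (l-b^2)^2" "(a^2-l)^2 = (l-a^2)^2" by algebra+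
      ultimately show ?thesis by simp
    qed
    also have "\<dots> = 1"
    proof -
      have "((l - a^2) * (l - b^2))^2 \<noteq> 0" using n1 by simp
      then show ?thesis unfolding P[symmetric] by simp
    qed
    finally show ?thesis .
  qed
  then show "(a^2*q1/(a^2-l), b^2*q2/(b^2-l)) \<in> ellipse a b" by (simp add: ellipse_def)
  show "(a^2*q1/(a^2-l) - q1)^2 + (b^2*q2/(b^2-l) - q2)^2 = (l/(a^2-l)*q1)^2 + (l/(b^2-l)*q2)^2"
    using n1 by (simp add: field_simps)
  have "(a^2*q1/(a^2-l) - q1)^2 + (b^2*q2/(b^2-l) - q2)^2
      = (a^2*q1/(a^2-l) - q1)^2 + (b^2*q2/(b^2-l) - q2)^2 - l*((a^2*q1/(a^2-l)/a)^2 + (b^2*q2/(b^2-l)/b)^2 - 1)"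
    using E by simp
  also have "\<dots> = (a^2-l)/a^2*(a^2*q1/(a^2-l) - a^2*q1/(a^2-l))^2 + (b^2-l)/b^2*(b^2*q2/(b^2-l) - b^2*q2/(b^2-l))^2
     + (l - l*q1^2/(a^2-l) - l*q2^2/(b^2-l))"
    by (rule ident) (use a assms n1 in auto)
  finally show "(a^2*q1/(a^2-l) - q1)^2 + (b^2*q2/(b^2-l) - q2)^2 = l - l*q1^2/(a^2-l) - l*q2^2/(b^2-l)" by simp
qed

definition Fq :: "real \<Rightarrow> real \<Rightarrow> real \<Rightarrow> real \<Rightarrow> real \<Rightarrow> real" where
  "Fq a b q1 q2 l = (a^2*q1^2)/(a^2-l)^2 + (b^2*q2^2)/(b^2-l)^2"

lemma Pq_Fq:
  fixes a b l q1 q2 :: real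
  assumes "l \<noteq> a^2" "l \<noteq> b^2"
  shows "Pq a b q1 q2 l = ((l - a^2) * (l - b^2))^2 * (1 - Fq a b q1 q2 l)"
proof -
  have n1: "a^2 - l \<noteq> 0" "b^2 - l \<noteq> 0" using assms by auto
  have "Fq a b q1 q2 l = (a^2*q1^2*(b^2-l)^2 + b^2*q2^2*(a^2-l)^2)/((a^2-l)*(b^2-l))^2"
    unfolding Fq_def by (rule frac2) (use n1 in auto)
  also have "\<dots> = (a^2 * q1^2 * (l - b^2)^2 + b^2 * q2^2 * (l - a^2)^2) / ((l - a^2) * (l - b^2))^2"
  proof -
    have "((a^2-l)*(b^2-l))^2 = ((l - a^2) * (l - b^2))^2" by algebra
    moreover have "(b^2-l)^2 = (l-b^2)^2" "(a^2-l)^2 = (l-a^2)^2" by algebra+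
    ultimately show ?thesis by simp
  qed
  finally have F: "Fq a b q1 q2 l = (a^2 * q1^2 * (l - b^2)^2 + b^2 * q2^2 * (l - a^2)^2) / ((l - a^2) * (l - b^2))^2" .
  have nz: "((l - a^2) * (l - b^2))^2 \<noteq> 0" using n1 by simp
  show ?thesis unfolding F Pq_def using nz by (simp add: field_simps)
qed

lemma lam_eq:
  assumes "Pq a b q1 q2 l0 = 0" "\<forall>l. Pq a b q1 q2 l = 0 \<longrightarrow> l0 \<le> l"
  shows "lam_star a b q1 q2 = l0"
  unfolding lam_star_def by (rule Least_equality) (use assms in auto)

lemma root_ab:
  fixes a q1 q2 :: real
  assumes "0 < a"
  defines "l0 \<equiv> a^2 - a * sqrt (q1^2 + q2^2)"
  shows "Pq a a q1 q2 l0 = 0 \<and> (\<forall>l. Pq a a q1 q2 l = 0 \<longrightarrow> l0 \<le> l) \<and> lam_star a a q1 q2 = l0"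
proof -
  define r where "r = sqrt (q1^2 + q2^2)"
  have r0: "r \<ge> 0" and r2: "r^2 = q1^2 + q2^2" unfolding r_def by auto
  have fac: "Pq a a q1 q2 l = (l-a^2)^2 * ((l-a^2)^2 - (a*r)^2)" for l
    unfolding Pq_def using r2 by algebra
  have root: "Pq a a q1 q2 l0 = 0" unfolding fac l0_def r_def[symmetric] by (simp add: power_mult_distrib)
  have minr: "\<forall>l. Pq a a q1 q2 l = 0 \<longrightarrow> l0 \<le> l"
  proof (intro allI impI)
    fix l assume "Pq a a q1 q2 l = 0"
    then have "(l-a^2)^2 = 0 \<or> (l-a^2)^2 = (a*r)^2" unfolding fac by simp
    moreover have "a * r \<ge> 0" using r0 assms by simp
    ultimately have "l - a^2 = 0 \<or> l - a^2 = a*r \<or> l - a^2 = -(a*r)"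
      by (simp add: power2_eq_iff)
    then show "l0 \<le> l" unfolding l0_def r_def[symmetric] using \<open>a*r \<ge> 0\<close> by linarith
  qed
  show ?thesis using root minr lam_eq[OF root minr] by simp
qed

lemma root_q2z:
  fixes a b q1 :: real
  assumes "0 < b" "b < a"
  defines "l0 \<equiv> min (a^2 - a * \<bar>q1\<bar>) (b^2)"
  shows "Pq a b q1 0 l0 = 0 \<and> (\<forall>l. Pq a b q1 0 l = 0 \<longrightarrow> l0 \<le> l) \<and> lam_star a b q1 0 = l0"
proof -
  have fac: "Pq a b q1 0 l = (l-b^2)^2 * ((l-a^2)^2 - (a*\<bar>q1\<bar>)^2)" for l
    unfolding Pq_def by (simp add: power_mult_distrib) algebra
  have root: "Pq a b q1 0 l0 = 0" unfolding fac l0_def by (cases "a^2 - a * \<bar>q1\<bar> \<le> b^2") (auto simp: min_def)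
  have aq: "a * \<bar>q1\<bar> \<ge> 0" using assms by simp
  have minr: "\<forall>l. Pq a b q1 0 l = 0 \<longrightarrow> l0 \<le> l"
  proof (intro allI impI)
    fix l assume "Pq a b q1 0 l = 0"
    then have "(l-b^2)^2 = 0 \<or> (l-a^2)^2 = (a*\<bar>q1\<bar>)^2" unfolding fac by simp
    then have "l - b^2 = 0 \<or> l - a^2 = a*\<bar>q1\<bar> \<or> l - a^2 = -(a*\<bar>q1\<bar>)"
      by (simp add: power2_eq_iff)
    then show "l0 \<le> l" unfolding l0_def using aq by (auto simp: min_def)
  qed
  show ?thesis using root minr lam_eq[OF root minr] by simp
qed

lemma Fq_mono:
  fixes a b q1 q2 l m :: real
  assumes "0 < b" "b < a" "q2 \<noteq> 0" "l < m" "m < b^2"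
  shows "Fq a b q1 q2 l < Fq a b q1 q2 m"
proof -
  have bb: "b^2 < a^2" using assms by (simp add: power_strict_mono)
  have m1: "0 < a^2 - m" "a^2 - m < a^2 - l" using assms bb by linarith+
  have m2: "0 < b^2 - m" "b^2 - m < b^2 - l" using assms bb by linarith+
  have s1: "(a^2 - m)^2 < (a^2 - l)^2" using m1 by (simp add: power_strict_mono)
  have s2: "(b^2 - m)^2 < (b^2 - l)^2" using m2 by (simp add: power_strict_mono)
  have "(a^2*q1^2)/(a^2-l)^2 \<le> (a^2*q1^2)/(a^2-m)^2"
    by (rule divide_left_mono) (use s1 m1 in auto)
  moreover have "(b^2*q2^2)/(b^2-l)^2 < (b^2*q2^2)/(b^2-m)^2"
    by (rule divide_strict_left_mono) (use s2 m2 assms in auto)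
  ultimately show ?thesis unfolding Fq_def by linarith
qed

lemma Pq_root_iff:
  fixes a b q1 q2 l :: real
  assumes "0 < b" "b \<le> a" "l < b^2"
  shows "Pq a b q1 q2 l = 0 \<longleftrightarrow> Fq a b q1 q2 l = 1"
proof -
  have bb: "b^2 \<le> a^2" using assms by (simp add: power_mono)
  have n: "l \<noteq> a^2" "l \<noteq> b^2" using assms(3) bb by linarith+
  have "((l - a^2) * (l - b^2))^2 \<noteq> 0" using n by simp
  then show ?thesis unfolding Pq_Fq[OF n] by simp
qed

lemma root_q2nz:
  fixes a b q1 q2 :: real
  assumes "0 < b" "b < a" "q2 \<noteq> 0"
  shows "lam_star a b q1 q2 < b^2 \<and> Pq a b q1 q2 (lam_star a b q1 q2) = 0
    \<and> (\<forall>l. Pq a b q1 q2 l = 0 \<longrightarrow> lam_star a b q1 q2 \<le> l)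
    \<and> (\<forall>l<b^2. Pq a b q1 q2 l = 0 \<longrightarrow> l = lam_star a b q1 q2)"
proof -
  have bb: "b^2 < a^2" using assms by (simp add: power_strict_mono)
  define A where "A = a * \<bar>q1\<bar>"
  define B where "B = b * \<bar>q2\<bar>"
  define M where "M = 1 + A + B"
  have A0: "A \<ge> 0" and B0: "B \<ge> 0" using assms unfolding A_def B_def by auto
  have M0: "M > 0" unfolding M_def using A0 B0 by linarith
  have A2: "A^2 = a^2*q1^2" and B2: "B^2 = b^2*q2^2" unfolding A_def B_def by (simp_all add: power_mult_distrib)
  have M2: "M^2 = 1 + A^2 + B^2 + 2*A + 2*B + 2*A*B" unfolding M_def by algebra
  have AB: "A*B \<ge> 0" using A0 B0 by simp
  have Mbig: "a^2*q1^2 + b^2*q2^2 < M^2" using M2 A2 B2 A0 B0 AB by linarith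
  define l1 where "l1 = b^2 - M"
  have l1b: "l1 < b^2" unfolding l1_def using M0 by linarith
  have F1: "Fq a b q1 q2 l1 < 1"
  proof -
    have g: "M \<le> a^2 - l1" "b^2 - l1 = M" unfolding l1_def using bb by linarith+
    have g2: "M^2 \<le> (a^2 - l1)^2" using g M0 by (simp add: power_mono)
    have "(a^2*q1^2)/(a^2-l1)^2 \<le> (a^2*q1^2)/M^2"
      by (rule divide_left_mono) (use g2 M0 g in auto)
    then have "Fq a b q1 q2 l1 \<le> (a^2*q1^2)/M^2 + (b^2*q2^2)/M^2" unfolding Fq_def g(2) by linarith
    also have "\<dots> = (a^2*q1^2 + b^2*q2^2)/M^2" by (simp add: add_divide_distrib)
    also have "\<dots> < 1" using Mbig M0 by simp
    finally show ?thesis .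
  qed
  have n1: "l1 \<noteq> a^2" "l1 \<noteq> b^2" using l1b bb by linarith+
  have P1: "Pq a b q1 q2 l1 > 0"
  proof -
    have "((l1 - a^2) * (l1 - b^2))^2 > 0" using n1 by simp
    then show ?thesis unfolding Pq_Fq[OF n1] using F1 by simp
  qed
  have Pb: "Pq a b q1 q2 (b^2) < 0"
  proof -
    have "(b^2 - a^2)^2 > 0" using bb by simp
    moreover have "b^2*q2^2 > 0" using assms by simp
    ultimately have "b^2*q2^2*(b^2-a^2)^2 > 0" by simp
    then show ?thesis unfolding Pq_def by simp
  qed
  have cont: "\<forall>x. l1 \<le> x \<and> x \<le> b^2 \<longrightarrow> isCont (Pq a b q1 q2) x"
  proof (intro allI impI)
    fix x
    have "isCont (\<lambda>l. Pq a b q1 q2 l) x" unfolding Pq_def by (intro continuous_intros)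
    then show "isCont (Pq a b q1 q2) x" by simp
  qed
  obtain l0 where l0: "l1 \<le> l0" "l0 \<le> b^2" "Pq a b q1 q2 l0 = 0"
    using IVT2[of "Pq a b q1 q2" "b^2" 0 l1] Pb P1 l1b cont by force
  have l0b: "l0 < b^2" using l0 Pb by (cases "l0 = b^2") auto
  have F0: "Fq a b q1 q2 l0 = 1" using Pq_root_iff[of b a l0 q1 q2] assms l0b l0 by simp
  have uniq: "\<forall>l<b^2. Pq a b q1 q2 l = 0 \<longrightarrow> l = l0"
  proof (intro allI impI)
    fix l assume l: "l < b^2" "Pq a b q1 q2 l = 0"
    have Fl: "Fq a b q1 q2 l = 1" using Pq_root_iff[of b a l q1 q2] assms l by simp
    show "l = l0"
    proof (rule ccontr)
      assume "l \<noteq> l0"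
      then have "l < l0 \<or> l0 < l" by linarith
      then show False
      proof
        assume "l < l0" then show False using Fq_mono[of b a q2 l l0 q1, OF assms \<open>l < l0\<close> l0b] Fl F0 by linarith
      next
        assume "l0 < l" then show False using Fq_mono[of b a q2 l0 l q1, OF assms \<open>l0 < l\<close> l(1)] Fl F0 by linarith
      qed
    qed
  qed
  have minr: "\<forall>l. Pq a b q1 q2 l = 0 \<longrightarrow> l0 \<le> l"
  proof (intro allI impI)
    fix l assume "Pq a b q1 q2 l = 0"
    then show "l0 \<le> l" using uniq l0b by (cases "l < b^2") auto
  qed
  have eq: "lam_star a b q1 q2 = l0" by (rule lam_eq) (use l0 minr in auto)
  show ?thesis unfolding eq using l0b l0(3) minr uniq by blast
qed

lemma dist_eq:
  assumes "m \<in> sqdists a b q1 q2" "\<forall>d\<in>sqdists a b q1 q2. m \<le> d"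
  shows "dist2_ell a b q1 q2 \<in> sqdists a b q1 q2 \<and> (\<forall>d\<in>sqdists a b q1 q2. dist2_ell a b q1 q2 \<le> d)
     \<and> dist2_ell a b q1 q2 = m"
proof -
  have "dist2_ell a b q1 q2 = m" unfolding dist2_ell_def
    by (rule cInf_eq_minimum) (use assms in auto)
  then show ?thesis using assms by simp
qed

lemma dist_case1:
  fixes a b l q1 q2 :: real
  assumes "0 < b" "b \<le> a" "l < b^2" "Pq a b q1 q2 l = 0"
  shows "dist2_ell a b q1 q2 \<in> sqdists a b q1 q2 \<and> (\<forall>d\<in>sqdists a b q1 q2. dist2_ell a b q1 q2 \<le> d)
     \<and> dist2_ell a b q1 q2 = (l/(a^2-l)*q1)^2 + (l/(b^2-l)*q2)^2"
proof (rule dist_eq)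
  note at = attain[OF assms]
  show "(l/(a^2-l)*q1)^2 + (l/(b^2-l)*q2)^2 \<in> sqdists a b q1 q2"
    unfolding sqdists_def using at(1) at(2)[symmetric] by blast
  show "\<forall>d\<in>sqdists a b q1 q2. (l/(a^2-l)*q1)^2 + (l/(b^2-l)*q2)^2 \<le> d"
  proof
    fix d assume "d \<in> sqdists a b q1 q2"
    then obtain x1 x2 where d: "d = (x1 - q1)^2 + (x2 - q2)^2" "(x1, x2) \<in> ellipse a b"
      unfolding sqdists_def by blast
    show "(l/(a^2-l)*q1)^2 + (l/(b^2-l)*q2)^2 \<le> d"
      using lower[OF assms(1-3) d(2), of q1 q2] at(2) at(3) d(1) by linarith
  qed
qed

lemma dist_case2:
  fixes a b :: real
  assumes "0 < b" "b \<le> a"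
  shows "dist2_ell a b 0 0 \<in> sqdists a b 0 0 \<and> (\<forall>d\<in>sqdists a b 0 0. dist2_ell a b 0 0 \<le> d)
     \<and> dist2_ell a b 0 0 = b^2"
proof (rule dist_eq)
  have "(0, b) \<in> ellipse a b" unfolding ellipse_def using assms by simp
  then show "b^2 \<in> sqdists a b 0 0" unfolding sqdists_def by force
  show "\<forall>d\<in>sqdists a b 0 0. b^2 \<le> d"
  proof
    fix d assume "d \<in> sqdists a b 0 0"
    then obtain x1 x2 where d: "d = (x1 - 0)^2 + (x2 - 0)^2" "(x1, x2) \<in> ellipse a b"
      unfolding sqdists_def by blast
    have e: "(x1/a)^2 + (x2/b)^2 = 1" using d(2) unfolding ellipse_def by simp
    have bb: "b^2 \<le> a^2" using assms by (simp add: power_mono)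
    have a0: "a^2 > 0" using assms by simp
    have x2: "x2^2 = b^2 - b^2 * (x1^2/a^2)"
    proof -
      have "x2^2/b^2 = 1 - x1^2/a^2" using e by (simp add: power_divide)
      then have "x2^2 = (1 - x1^2/a^2) * b^2" using assms(1) by (simp add: divide_eq_eq)
      then show ?thesis by (simp add: algebra_simps)
    qed
    have "b^2 * (x1^2/a^2) \<le> x1^2"
    proof -
      have "b^2 * (x1^2/a^2) = (b^2/a^2) * x1^2" by simp
      also have "\<dots> \<le> 1 * x1^2" by (rule mult_right_mono) (use bb a0 in auto)
      finally show ?thesis by simp
    qed
    then show "b^2 \<le> d" using d(1) x2 by simp
  qed
qed

lemma dist_case3:
  fixes a b q1 :: real
  assumes "0 < b" "b < a" "a^2 - a * \<bar>q1\<bar> \<ge> b^2"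
  shows "dist2_ell a b q1 0 \<in> sqdists a b q1 0 \<and> (\<forall>d\<in>sqdists a b q1 0. dist2_ell a b q1 0 \<le> d)
     \<and> dist2_ell a b q1 0 = b^2 - b^2 / (a^2 - b^2) * q1^2"
proof (rule dist_eq)
  have bb: "b^2 < a^2" using assms by (simp add: power_strict_mono)
  have a0: "a > 0" using assms by simp
  have key: "(x1-q1)^2 + x2^2 = (a^2-b^2)/a^2*(x1 - a^2*q1/(a^2-b^2))^2 + (b^2 - b^2 / (a^2 - b^2) * q1^2)"
    if "(x1, x2) \<in> ellipse a b" for x1 x2
  proof -
    have e: "(x1/a)^2 + (x2/b)^2 = 1" using that unfolding ellipse_def by simp
    have x2: "x2^2 = b^2 - b^2 * (x1^2/a^2)"
    proof -
      have "x2^2/b^2 = 1 - x1^2/a^2" using e by (simp add: power_divide)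
      then have "x2^2 = (1 - x1^2/a^2) * b^2" using assms(1) by (simp add: divide_eq_eq)
      then show ?thesis by (simp add: algebra_simps)
    qed
    have "(x1-q1)^2 - b^2*(x1^2/a^2) = (a^2-b^2)/a^2*(x1 - a^2*q1/(a^2-b^2))^2 - b^2*q1^2/(a^2-b^2)"
      by (rule ident1) (use a0 bb in auto)
    then show ?thesis using x2 by simp
  qed
  define y1 where "y1 = a^2*q1/(a^2-b^2)"
  define y2 where "y2 = b * sqrt (1 - y1^2/a^2)"
  have y1a: "\<bar>y1\<bar> \<le> a"
  proof -
    have p: "a^2 - b^2 > 0" using bb by simp
    have "\<bar>y1\<bar> = a^2*\<bar>q1\<bar>/(a^2-b^2)" unfolding y1_def using p by (simp add: abs_mult)
    also have "\<dots> \<le> a"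
    proof -
      have "a*\<bar>q1\<bar> \<le> a^2 - b^2" using assms(3) by linarith
      then have "a*(a*\<bar>q1\<bar>) \<le> a*(a^2 - b^2)" using a0 by (simp add: mult_left_mono)
      then have "a^2*\<bar>q1\<bar> \<le> a*(a^2 - b^2)" by (simp add: power2_eq_square mult.assoc)
      then show ?thesis using p by (simp add: pos_divide_le_eq)
    qed
    finally show ?thesis .
  qed
  have y1a2: "y1^2/a^2 \<le> 1"
  proof -
    have "y1^2 \<le> a^2" using y1a a0 by (metis abs_le_square_iff abs_of_pos)
    then show ?thesis using a0 by simp
  qed
  have y22: "y2^2 = b^2 * (1 - y1^2/a^2)" unfolding y2_def using y1a2 by (simp add: power_mult_distrib)
  have yell: "(y1, y2) \<in> ellipse a b"
    unfolding ellipse_def using y22 assms a0 by (simp add: power_divide)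
  have "(y1-q1)^2 + (y2-0)^2 = b^2 - b^2 / (a^2 - b^2) * q1^2"
    using key[OF yell] unfolding y1_def by simp
  then show "b^2 - b^2 / (a^2 - b^2) * q1^2 \<in> sqdists a b q1 0"
    unfolding sqdists_def using yell by force
  show "\<forall>d\<in>sqdists a b q1 0. b^2 - b^2 / (a^2 - b^2) * q1^2 \<le> d"
  proof
    fix d assume "d \<in> sqdists a b q1 0"
    then obtain x1 x2 where d: "d = (x1 - q1)^2 + (x2 - 0)^2" "(x1, x2) \<in> ellipse a b"
      unfolding sqdists_def by blast
    have "(a^2-b^2)/a^2*(x1 - a^2*q1/(a^2-b^2))^2 \<ge> 0" using bb
      by (intro mult_nonneg_nonneg divide_nonneg_nonneg) auto
    then show "b^2 - b^2 / (a^2 - b^2) * q1^2 \<le> d" using key[OF d(2)] d(1) by simp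
  qed
qed



theorem mainTheorem1:
  fixes a b q1 q2 :: real
  assumes "0 < b" and "b \<le> a"
  shows "Pq a b q1 q2 (lam_star a b q1 q2) = 0 \<and> (\<forall>l. Pq a b q1 q2 l = 0 \<longrightarrow> lam_star a b q1 q2 \<le> l)
    \<and> dist2_ell a b q1 q2 \<in> sqdists a b q1 q2 \<and> (\<forall>d\<in>sqdists a b q1 q2. dist2_ell a b q1 q2 \<le> d)
    \<and> ((q2 \<noteq> 0 \<or> a^2 - a * \<bar>q1\<bar> < b^2) \<longrightarrow>
           dist2_ell a b q1 q2 =
             (lam_star a b q1 q2 / (a^2 - lam_star a b q1 q2) * q1)^2
             + (lam_star a b q1 q2 / (b^2 - lam_star a b q1 q2) * q2)^2)
    \<and> ((q1 = 0 \<and> q2 = 0) \<longrightarrow> dist2_ell a b q1 q2 = b^2)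
    \<and> ((q2 = 0 \<and> q1 \<noteq> 0 \<and> a^2 - a * \<bar>q1\<bar> \<ge> b^2) \<longrightarrow>
           dist2_ell a b q1 q2 = b^2 - b^2 / (a^2 - b^2) * q1^2)
    \<and> (a = b \<longrightarrow> lam_star a b q1 q2 = a^2 - a * sqrt (q1^2 + q2^2))
    \<and> ((b < a \<and> q2 \<noteq> 0) \<longrightarrow>
           lam_star a b q1 q2 < b^2 \<and> Pq a b q1 q2 (lam_star a b q1 q2) = 0
           \<and> (\<forall>l<b^2. Pq a b q1 q2 l = 0 \<longrightarrow> l = lam_star a b q1 q2))
    \<and> ((b < a \<and> q2 = 0) \<longrightarrow> lam_star a b q1 q2 = min (a^2 - a * \<bar>q1\<bar>) (b^2))"
proof -
  have a0: "a > 0" using assms by linarith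
  define L where "L = lam_star a b q1 q2"
  have Rab: "Pq a b q1 q2 L = 0 \<and> (\<forall>l. Pq a b q1 q2 l = 0 \<longrightarrow> L \<le> l)
      \<and> L = a^2 - a * sqrt (q1^2 + q2^2)" if ab: "a = b"
    unfolding L_def ab[symmetric] using root_ab[OF a0, of q1 q2] by simp
  have Rz: "Pq a b q1 q2 L = 0 \<and> (\<forall>l. Pq a b q1 q2 l = 0 \<longrightarrow> L \<le> l)
      \<and> L = min (a^2 - a * \<bar>q1\<bar>) (b^2)" if ba: "b < a" and q: "q2 = 0"
    unfolding L_def q using root_q2z[OF assms(1) ba, of q1] by simp
  have Rnz: "L < b^2 \<and> Pq a b q1 q2 L = 0
    \<and> (\<forall>l. Pq a b q1 q2 l = 0 \<longrightarrow> L \<le> l) \<and> (\<forall>l<b^2. Pq a b q1 q2 l = 0 \<longrightarrow> l = L)" if ba: "b < a" and q: "q2 \<noteq> 0"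
    unfolding L_def by (rule root_q2nz[OF assms(1) ba q])
  have cs: "a = b \<or> (b < a \<and> q2 = 0) \<or> (b < a \<and> q2 \<noteq> 0)" using assms by linarith
  have R1: "Pq a b q1 q2 L = 0 \<and> (\<forall>l. Pq a b q1 q2 l = 0 \<longrightarrow> L \<le> l)"
    using cs Rab Rz Rnz by blast
  have C1: "L < b^2" if c: "q2 \<noteq> 0 \<or> a^2 - a * \<bar>q1\<bar> < b^2"
  proof -
    consider "a = b" | "b < a" "q2 = 0" | "b < a" "q2 \<noteq> 0" using cs by blast
    then show ?thesis
    proof cases
      case 1
      have "q1 \<noteq> 0 \<or> q2 \<noteq> 0" using c 1 by auto
      then have "q1^2 + q2^2 > 0" by (auto simp: sum_power2_gt_zero_iff)
      then have "sqrt (q1^2 + q2^2) > 0" by simp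
      then have "a * sqrt (q1^2 + q2^2) > 0" using a0 by simp
      then show ?thesis using Rab[OF 1] 1 by simp
    next
      case 2
      then show ?thesis using Rz[OF 2] c by (simp add: min_def)
    next
      case 3
      then show ?thesis using Rnz[OF 3] by simp
    qed
  qed
  have D: "dist2_ell a b q1 q2 \<in> sqdists a b q1 q2 \<and> (\<forall>d\<in>sqdists a b q1 q2. dist2_ell a b q1 q2 \<le> d)
    \<and> ((q2 \<noteq> 0 \<or> a^2 - a * \<bar>q1\<bar> < b^2) \<longrightarrow>
           dist2_ell a b q1 q2 = (L / (a^2 - L) * q1)^2 + (L / (b^2 - L) * q2)^2)
    \<and> ((q1 = 0 \<and> q2 = 0) \<longrightarrow> dist2_ell a b q1 q2 = b^2)
    \<and> ((q2 = 0 \<and> q1 \<noteq> 0 \<and> a^2 - a * \<bar>q1\<bar> \<ge> b^2) \<longrightarrow>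
           dist2_ell a b q1 q2 = b^2 - b^2 / (a^2 - b^2) * q1^2)"
  proof (cases "q2 \<noteq> 0 \<or> a^2 - a * \<bar>q1\<bar> < b^2")
    case True
    have "b^2 \<le> a^2" using assms by (simp add: power_mono)
    then have "\<not> (q1 = 0 \<and> q2 = 0)" using True by auto
    moreover have "\<not> (q2 = 0 \<and> q1 \<noteq> 0 \<and> a^2 - a * \<bar>q1\<bar> \<ge> b^2)" using True by auto
    ultimately show ?thesis using dist_case1[OF assms C1[OF True], of q1 q2] R1 True by blast
  next
    case False
    then have q2: "q2 = 0" and ge: "a^2 - a * \<bar>q1\<bar> \<ge> b^2" by auto
    show ?thesis
    proof (cases "q1 = 0")
      case True
      have "b^2 \<le> a^2" using assms by (simp add: power_mono)
      then show ?thesis unfolding True q2 using dist_case2[OF assms] by auto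
    next
      case q1: False
      have "b \<noteq> a"
      proof
        assume "b = a"
        then have "a * \<bar>q1\<bar> \<le> 0" using ge by simp
        moreover have "a * \<bar>q1\<bar> > 0" using a0 q1 by simp
        ultimately show False by simp
      qed
      then have ba: "b < a" using assms by simp
      show ?thesis unfolding q2 using dist_case3[OF assms(1) ba ge] q1 ge by auto
    qed
  qed
  show ?thesis unfolding L_def[symmetric] using R1 D Rab Rz Rnz by blast
qed

end
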